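(* Under Slater's condition (there exists $\bar x\in X$ with $g(\bar x)<0$), for any $\tilde\mu\in\mathbb{R}^m_{\ge0}$ and any Slater vector $\bar x$, one has $\max_{\mu^*\in D^*_L}\|\mu^*\|\le r(\bar x,\tilde\mu)$; consequently $D^*_L\subseteq \bar M^{[i]}(\bar x,\tilde\mu)$ for every $i\in V$, and $D^*_L\subseteq M:=\bigcap_{i=1}^N M^{[i]}$, where $M^{[i]}$ are the sets produced by the Distributed Slater-vector Computation Algorithm.
   Context: Problem: minimize $f(x)=\sum_{i=1}^N f^{[i]}(x)$ subject to $g(x)\le0$, $x\in X=\bigcap_{i=1}^N X^{[i]}$, with convex $f^{[i]}$, nonempty compact convex $X^{[i]}$, convex components of $g:\mathbb{R}^n\to\mathbb{R}^m$, and nonempty feasible set. $\mathcal{L}(x,\mu)=f(x)+N\mu^Tg(x)$, $q_L(\mu)=\inf_{x\in X}\mathcal{L}(x,\mu)$, $D^*_L$ the set of maximizers of $q_L$ over $\mathbb{R}^m_{\ge0}$. $q^{[i]}(\mu)=\inf_{x\in X^{[i]}}(f^{[i]}(x)+\mu^Tg(x))$, $\gamma(x)=\min_\ell\{-g_\ell(x)\}$, $r(x,\mu)=\frac{N}{\gamma(x)}\max_{i}\{f^{[i]}(x)-q^{[i]}(\mu)\}$, $\bar M^{[i]}(\bar x,\tilde\mu)=\{\mu\in\mathbb{R}^m_{\ge0}:\|\mu\|\le r(\bar x,\tilde\mu)+\theta^{[i]}\}$ with fixed $\theta^{[i]}>0$. $M^{[i]}=\{\mu\in\mathbb{R}^m_{\ge0}:\|\mu\|\le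 Nb^*/c^*+\theta^{[i]}\}$ where $b^*=\max_j b^{[j]}(0)$, $c^*=\min_j c^{[j]}(0)$, with positive constants $b^{[i]}(0)\ge\sup_{x\in J^{[i]}}\{f^{[i]}(x)-q^{[i]}(\tilde\mu)\}$ and $c^{[i]}(0)\le\min_\ell\inf_{x\in J^{[i]}}\{-g_\ell(x)\}$, $J^{[i]}=\{x\in X^{[i]}:g(x)<0\}$. *)

theory Defs
  imports "HOL-Analysis.Analysis"
begin

definition nonneg_orthant :: "(real ^ 'm) set" where
  "nonneg_orthant = {\<mu>. \<forall>l. 0 \<le> \<mu> $ l}"

definition Xall :: "nat \<Rightarrow> (nat \<Rightarrow> (real ^ 'n) set) \<Rightarrow> (real ^ 'n) set" where
  "Xall N Xs = (\<Inter>i\<in>{1..N}. Xs i)"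

definition Lag :: "nat \<Rightarrow> (nat \<Rightarrow> real ^ 'n \<Rightarrow> real) \<Rightarrow> (real ^ 'n \<Rightarrow> real ^ 'm)
    \<Rightarrow> real ^ 'n \<Rightarrow> real ^ 'm \<Rightarrow> real" where
  "Lag N f g x \<mu> = (\<Sum>i\<in>{1..N}. f i x) + real N * (\<mu> \<bullet> g x)"

definition qL :: "nat \<Rightarrow> (nat \<Rightarrow> real ^ 'n \<Rightarrow> real) \<Rightarrow> (nat \<Rightarrow> (real ^ 'n) set)
    \<Rightarrow> (real ^ 'n \<Rightarrow> real ^ 'm) \<Rightarrow> real ^ 'm \<Rightarrow> real" where
  "qL N f Xs g \<mu> = Inf ((\<lambda>x. Lag N f g x \<mu>) ` Xall N Xs)"

definition DL :: "nat \<Rightarrow> (nat \<Rightarrow> real ^ 'n \<Rightarrow> real) \<Rightarrow> (nat \<Rightarrow> (real ^ 'n) set)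
    \<Rightarrow> (real ^ 'n \<Rightarrow> real ^ 'm) \<Rightarrow> (real ^ 'm) set" where
  "DL N f Xs g = {\<mu> \<in> nonneg_orthant. \<forall>\<nu> \<in> nonneg_orthant. qL N f Xs g \<nu> \<le> qL N f Xs g \<mu>}"

definition qloc :: "(nat \<Rightarrow> real ^ 'n \<Rightarrow> real) \<Rightarrow> (nat \<Rightarrow> (real ^ 'n) set)
    \<Rightarrow> (real ^ 'n \<Rightarrow> real ^ 'm) \<Rightarrow> nat \<Rightarrow> real ^ 'm \<Rightarrow> real" where
  "qloc f Xs g i \<mu> = Inf ((\<lambda>x. f i x + \<mu> \<bullet> g x) ` Xs i)"

definition gam :: "(real ^ 'n \<Rightarrow> real ^ 'm) \<Rightarrow> real ^ 'n \<Rightarrow> real" where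
  "gam g x = Min (range (\<lambda>l. - (g x $ l)))"

definition rfun :: "nat \<Rightarrow> (nat \<Rightarrow> real ^ 'n \<Rightarrow> real) \<Rightarrow> (nat \<Rightarrow> (real ^ 'n) set)
    \<Rightarrow> (real ^ 'n \<Rightarrow> real ^ 'm) \<Rightarrow> real ^ 'n \<Rightarrow> real ^ 'm \<Rightarrow> real" where
  "rfun N f Xs g x \<mu> =
     real N / gam g x * Max ((\<lambda>i. f i x - qloc f Xs g i \<mu>) ` {1..N})"

definition Mbar :: "nat \<Rightarrow> (nat \<Rightarrow> real ^ 'n \<Rightarrow> real) \<Rightarrow> (nat \<Rightarrow> (real ^ 'n) set)
    \<Rightarrow> (real ^ 'n \<Rightarrow> real ^ 'm) \<Rightarrow> (nat \<Rightarrow> real) \<Rightarrow> nat \<Rightarrow> real ^ 'n \<Rightarrow> real ^ 'm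
    \<Rightarrow> (real ^ 'm) set" where
  "Mbar N f Xs g \<theta> i x \<mu>t = {\<mu> \<in> nonneg_orthant. norm \<mu> \<le> rfun N f Xs g x \<mu>t + \<theta> i}"

definition Jset :: "(nat \<Rightarrow> (real ^ 'n) set) \<Rightarrow> (real ^ 'n \<Rightarrow> real ^ 'm) \<Rightarrow> nat
    \<Rightarrow> (real ^ 'n) set" where
  "Jset Xs g i = {x \<in> Xs i. \<forall>l. g x $ l < 0}"

text \<open>M^[i] built from the constants b^[j](0) (here b j) and c^[j](0) (here c j).\<close>
definition Mset :: "nat \<Rightarrow> (nat \<Rightarrow> real) \<Rightarrow> (nat \<Rightarrow> real) \<Rightarrow> (nat \<Rightarrow> real) \<Rightarrow> nat
    \<Rightarrow> (real ^ 'm) set" where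
  "Mset N b c \<theta> i = {\<mu> \<in> nonneg_orthant.
      norm \<mu> \<le> real N * Max (b ` {1..N}) / Min (c ` {1..N}) + \<theta> i}"

end

theory Submission
  imports Defs
begin

lemma bdd_img:
  fixes K :: "'a::topological_space set" and \<phi> :: "'a \<Rightarrow> real"
  assumes "compact K" "continuous_on UNIV \<phi>"
  shows "bdd_below (\<phi> ` K)"
proof -
  have "continuous_on K \<phi>" using assms(2) continuous_on_subset by blast
  then have "compact (\<phi> ` K)" using assms(1) compact_continuous_image by blast
  then show ?thesis by (simp add: compact_imp_bounded bounded_imp_bdd_below)
qed

lemma cont_ig:
  fixes g :: "real ^ 'n \<Rightarrow> real ^ 'm"
  assumes "\<forall>l. convex_on UNIV (\<lambda>x. g x $ l)"
  shows "continuous_on UNIV (\<lambda>x. \<mu> \<bullet> g x)"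
proof -
  have c: "\<And>l. continuous_on UNIV (\<lambda>x. g x $ l)"
    using assms convex_on_continuous[OF open_UNIV] by blast
  have "(\<lambda>x. \<mu> \<bullet> g x) = (\<lambda>x. \<Sum>l\<in>UNIV. \<mu> $ l * g x $ l)"
    by (simp add: inner_vec_def)
  moreover have "continuous_on UNIV (\<lambda>x. \<Sum>l\<in>UNIV. \<mu> $ l * g x $ l)"
    by (intro continuous_intros c)
  ultimately show ?thesis by (simp only:)
qed

theorem mainTheorem3:
  fixes N :: nat
    and f :: "nat \<Rightarrow> real ^ 'n \<Rightarrow> real"
    and Xs :: "nat \<Rightarrow> (real ^ 'n) set"
    and g :: "real ^ 'n \<Rightarrow> real ^ 'm"
    and \<theta> b c :: "nat \<Rightarrow> real"
    and xbar :: "real ^ 'n"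
    and \<mu>t :: "real ^ 'm"
  assumes N_pos: "N \<ge> 1"
    and f_convex: "\<forall>i\<in>{1..N}. convex_on UNIV (f i)"
    and X_compact: "\<forall>i\<in>{1..N}. compact (Xs i)"
    and X_convex: "\<forall>i\<in>{1..N}. convex (Xs i)"
    and X_nonempty: "\<forall>i\<in>{1..N}. Xs i \<noteq> {}"
    and g_convex: "\<forall>l. convex_on UNIV (\<lambda>x. g x $ l)"
    and feasible: "{x \<in> Xall N Xs. \<forall>l. g x $ l \<le> 0} \<noteq> {}"
    and slater: "xbar \<in> Xall N Xs" "\<forall>l. g xbar $ l < 0"
    and mut_nonneg: "\<mu>t \<in> nonneg_orthant"
    and theta_pos: "\<forall>i\<in>{1..N}. \<theta> i > 0"
    and b_bound: "\<forall>i\<in>{1..N}. b i > 0 \<and>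
                    (\<forall>x\<in>Jset Xs g i. f i x - qloc f Xs g i \<mu>t \<le> b i)"
    and c_bound: "\<forall>i\<in>{1..N}. c i > 0 \<and>
                    (\<forall>x\<in>Jset Xs g i. \<forall>l. c i \<le> - (g x $ l))"
  shows "(\<forall>\<mu>\<in>DL N f Xs g. norm \<mu> \<le> rfun N f Xs g xbar \<mu>t)
       \<and> (\<forall>i\<in>{1..N}. DL N f Xs g \<subseteq> Mbar N f Xs g \<theta> i xbar \<mu>t)
       \<and> DL N f Xs g \<subseteq> (\<Inter>i\<in>{1..N}. Mset N b c \<theta> i)"
proof -
  define S where "S = {1..N}"
  have finS: "finite S" "S \<noteq> {}" "1 \<in> S" using N_pos by (auto simp: S_def)
  have contf: "\<And>i. i \<in> S \<Longrightarrow> continuous_on UNIV (f i)"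
    using f_convex convex_on_continuous[OF open_UNIV] unfolding S_def by blast
  have XallS: "\<And>i. i \<in> S \<Longrightarrow> Xall N Xs \<subseteq> Xs i" by (auto simp: Xall_def S_def)
  have xbarX: "\<And>i. i \<in> S \<Longrightarrow> xbar \<in> Xs i" using slater(1) XallS by blast
  have qloc_le: "qloc f Xs g i \<mu>t \<le> f i x + \<mu>t \<bullet> g x" if "i \<in> S" "x \<in> Xs i" for i x
  proof -
    have "bdd_below ((\<lambda>x. f i x + \<mu>t \<bullet> g x) ` Xs i)"
      apply (rule bdd_img)
      using X_compact that apply (simp add: S_def)
      by (intro continuous_on_add contf[OF that(1)] cont_ig[OF g_convex])
    then show ?thesis unfolding qloc_def using that(2) by (rule cINF_lower)
  qed
  have mutg: "\<mu> \<bullet> g xbar \<le> 0" if "\<mu> \<in> nonneg_orthant" for \<mu>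
    unfolding inner_vec_def
    by (rule sum_nonpos) (use that slater(2) in \<open>auto simp: nonneg_orthant_def intro: mult_nonneg_nonpos less_imp_le\<close>)
  define D where "D i = f i xbar - qloc f Xs g i \<mu>t" for i
  have D_nn: "\<And>i. i \<in> S \<Longrightarrow> D i \<ge> 0"
    using qloc_le[OF _ xbarX] mutg[OF mut_nonneg] by (fastforce simp: D_def)
  define Mx where "Mx = Max (D ` S)"
  have DMx: "\<And>i. i \<in> S \<Longrightarrow> D i \<le> Mx" using finS by (auto simp: Mx_def)
  have Mx_nn: "Mx \<ge> 0" using DMx[OF finS(3)] D_nn[OF finS(3)] by linarith
  define \<gamma> where "\<gamma> = gam g xbar"
  have gam_le: "\<And>l. \<gamma> \<le> - (g xbar $ l)" by (auto simp: \<gamma>_def gam_def)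
  have gam_pos: "\<gamma> > 0"
  proof -
    have "\<gamma> \<in> range (\<lambda>l. - (g xbar $ l))" unfolding \<gamma>_def gam_def
      by (rule Min_in) auto
    then show ?thesis using slater(2) by auto
  qed
  have key: "\<gamma> * norm \<mu> \<le> Mx" if mu: "\<mu> \<in> DL N f Xs g" for \<mu>
  proof -
    have mun: "\<mu> \<in> nonneg_orthant" and mx: "qL N f Xs g \<mu>t \<le> qL N f Xs g \<mu>"
      using mu mut_nonneg by (auto simp: DL_def)
    have bddL: "bdd_below ((\<lambda>x. Lag N f g x \<nu>) ` Xall N Xs)" for \<nu>
    proof -
      have "bdd_below ((\<lambda>x. Lag N f g x \<nu>) ` Xs 1)"
        apply (rule bdd_img)
        using X_compact finS apply (simp add: S_def)
        unfolding Lag_def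
        by (intro continuous_on_add continuous_on_sum continuous_on_mult continuous_on_const
              cont_ig[OF g_convex]) (auto intro: contf simp: S_def)
      then show ?thesis by (rule bdd_below_mono) (use XallS[OF finS(3)] in auto)
    qed
    have up: "qL N f Xs g \<mu> \<le> Lag N f g xbar \<mu>"
      unfolding qL_def using bddL slater(1) by (rule cINF_lower)
    have low: "(\<Sum>i\<in>S. qloc f Xs g i \<mu>t) \<le> qL N f Xs g \<mu>t"
      unfolding qL_def
    proof (rule cINF_greatest)
      show "Xall N Xs \<noteq> {}" using slater(1) by auto
    next
      fix x assume x1: "x \<in> Xall N Xs"
      define y where "y = Lag N f g x \<mu>t"
      have x: "x \<in> Xall N Xs" "y = Lag N f g x \<mu>t" using x1 y_def by auto
      have "(\<Sum>i\<in>S. qloc f Xs g i \<mu>t) \<le> (\<Sum>i\<in>S. f i x + \<mu>t \<bullet> g x)"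
        by (rule sum_mono) (use qloc_le XallS x(1) in blast)
      also have "\<dots> = y" using x(2) by (simp add: Lag_def sum.distrib S_def)
      finally show "(\<Sum>i\<in>S. qloc f Xs g i \<mu>t) \<le> Lag N f g x \<mu>t" using y_def by simp
    qed
    have l1: "norm \<mu> \<le> (\<Sum>l\<in>UNIV. \<mu> $ l)"
      using norm_le_l1_cart[of \<mu>] mun by (simp add: nonneg_orthant_def)
    have "\<mu> \<bullet> g xbar \<le> (\<Sum>l\<in>UNIV. \<mu> $ l * (- \<gamma>))"
      unfolding inner_vec_def inner_real_def
    proof (rule sum_mono)
      fix l
      have "0 \<le> \<mu> $ l" using mun by (simp add: nonneg_orthant_def)
      then show "\<mu> $ l * g xbar $ l \<le> \<mu> $ l * (- \<gamma>)"
        using mult_left_mono[OF _ \<open>0 \<le> \<mu> $ l\<close>, of "g xbar $ l" "- \<gamma>"] gam_le[of l] by linarith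
    qed
    also have "\<dots> = - \<gamma> * (\<Sum>l\<in>UNIV. \<mu> $ l)" by (simp add: sum_distrib_left mult.commute)
    also have "\<dots> \<le> - \<gamma> * norm \<mu>" using l1 gam_pos by simp
    finally have ig: "\<mu> \<bullet> g xbar \<le> - \<gamma> * norm \<mu>" .
    have "(\<Sum>i\<in>S. qloc f Xs g i \<mu>t) \<le> (\<Sum>i\<in>S. f i xbar) + real N * (\<mu> \<bullet> g xbar)"
      using low mx up by (simp add: Lag_def S_def)
    note h = this
    have "real N * (\<mu> \<bullet> g xbar) \<le> real N * (- \<gamma> * norm \<mu>)"
      using ig by (rule mult_left_mono) simp
    moreover have "(\<Sum>i\<in>S. D i) = (\<Sum>i\<in>S. f i xbar) - (\<Sum>i\<in>S. qloc f Xs g i \<mu>t)"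
      by (simp add: D_def sum_subtractf)
    ultimately have "real N * (\<gamma> * norm \<mu>) \<le> (\<Sum>i\<in>S. D i)"
      using h by linarith
    also have "\<dots> \<le> (\<Sum>i\<in>S. Mx)" by (rule sum_mono) (use DMx in auto)
    also have "\<dots> = real N * Mx" by (simp add: S_def)
    finally show ?thesis using N_pos by simp
  qed
  have r_eq: "rfun N f Xs g xbar \<mu>t = real N / \<gamma> * Mx"
    by (simp add: rfun_def \<gamma>_def Mx_def D_def S_def)
  have part1: "\<forall>\<mu>\<in>DL N f Xs g. norm \<mu> \<le> rfun N f Xs g xbar \<mu>t"
  proof
    fix \<mu> assume mu: "\<mu> \<in> DL N f Xs g"
    have "norm \<mu> \<le> Mx / \<gamma>" using key[OF mu] gam_pos by (simp add: field_simps)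
    also have "\<dots> \<le> real N * (Mx / \<gamma>)"
    proof -
      have "0 \<le> Mx / \<gamma>" using Mx_nn gam_pos by simp
      moreover have "1 \<le> real N" using N_pos by simp
      ultimately show ?thesis using mult_right_mono[of 1 "real N" "Mx / \<gamma>"] by simp
    qed
    finally show "norm \<mu> \<le> rfun N f Xs g xbar \<mu>t" by (simp add: r_eq)
  qed
  have part2: "\<forall>i\<in>{1..N}. DL N f Xs g \<subseteq> Mbar N f Xs g \<theta> i xbar \<mu>t"
    using part1 theta_pos by (force simp: Mbar_def DL_def)
  have part3: "DL N f Xs g \<subseteq> (\<Inter>i\<in>{1..N}. Mset N b c \<theta> i)"
  proof
    fix \<mu> assume mu: "\<mu> \<in> DL N f Xs g"
    define B where "B = Max (b ` S)"
    define C where "C = Min (c ` S)"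
    have J: "\<And>i. i \<in> S \<Longrightarrow> xbar \<in> Jset Xs g i" using xbarX slater(2) by (auto simp: Jset_def)
    have Cpos: "C > 0" using finS c_bound by (auto simp: C_def S_def)
    have CleG: "C \<le> \<gamma>"
    proof -
      have "\<gamma> \<in> range (\<lambda>l. - (g xbar $ l))" unfolding \<gamma>_def gam_def by (rule Min_in) auto
      then obtain l where l: "\<gamma> = - (g xbar $ l)" by auto
      have "c 1 \<le> \<gamma>" using c_bound J[OF finS(3)] l finS(3) by (auto simp: S_def)
      moreover have "C \<le> c 1" using finS by (auto simp: C_def)
      ultimately show ?thesis by linarith
    qed
    have MxB: "Mx \<le> B"
    proof -
      have "Mx \<in> D ` S" unfolding Mx_def using finS by (intro Max_in) auto
      then obtain i where i: "i \<in> S" "Mx = D i" by auto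
      then have "D i \<le> b i" using b_bound J[OF i(1)] by (auto simp: D_def S_def)
      moreover have "b i \<le> B" using finS i by (auto simp: B_def)
      ultimately show ?thesis using i by linarith
    qed
    have "norm \<mu> \<le> real N / \<gamma> * Mx" using part1 mu r_eq by auto
    also have "\<dots> \<le> real N / C * Mx"
      using Cpos CleG Mx_nn by (intro mult_right_mono divide_left_mono) auto
    also have "\<dots> \<le> real N / C * B"
      using Cpos MxB by (intro mult_left_mono) auto
    finally have nb: "norm \<mu> \<le> real N * B / C" by simp
    show "\<mu> \<in> (\<Inter>i\<in>{1..N}. Mset N b c \<theta> i)"
      using nb mu theta_pos by (force simp: Mset_def DL_def B_def C_def S_def)
  qed
  show ?thesis using part1 part2 part3 by blast
qed

end
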